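(* Let $\widetilde Q_m(x)=x^mQ_m(1/x)$. Then for all $m\ge 0$, $$\widetilde Q_{m+1}(x)=(2mx+4m+2x+3)\widetilde Q_m(x)+2x(1+x)\widetilde Q_m'(x),\qquad \widetilde Q_0(x)=1.$$
   Context: $P_m(x)=\sum_{i=0}^m d_i(m)x^i$ with $d_i(m)=2^{-2m}\sum_{k=i}^m 2^k\binom{2m-2k}{m-k}\binom{m+k}{k}\binom{k}{i}$ (the Boros–Moll polynomials); $Q_m(x)=2^m m!\,x^mP_m(1/x)$, so $\widetilde Q_m(x)=2^m m!\,P_m(x)$. *)

theory Defs
  imports Complex_Main "HOL-Computational_Algebra.Polynomial"
begin

definition bm_d :: "nat \<Rightarrow> nat \<Rightarrow> real" where
  "bm_d m i = (1 / 2 ^ (2 * m)) *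
     (\<Sum>k = i..m. 2 ^ k * real ((2 * m - 2 * k) choose (m - k)) *
        real ((m + k) choose k) * real (k choose i))"

definition bm_P :: "nat \<Rightarrow> real poly" where
  "bm_P m = (\<Sum>i = 0..m. monom (bm_d m i) i)"

text \<open>Q_m(x) = 2^m m! x^m P_m(1/x), as a polynomial (coefficient of x^i in P_m goes to x^(m-i)).\<close>
definition bm_Q :: "nat \<Rightarrow> real poly" where
  "bm_Q m = (\<Sum>i = 0..m. monom (2 ^ m * fact m * coeff (bm_P m) i) (m - i))"

definition bm_Qt :: "nat \<Rightarrow> real poly" where
  "bm_Qt m = (\<Sum>j = 0..m. monom (coeff (bm_Q m) j) (m - j))"

end

theory Submission
  imports Defs
begin

lemma coeff_P: "coeff (bm_P m) n = (if n \<le> m then bm_d m n else 0)"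
  unfolding bm_P_def by (simp add: coeff_sum coeff_monom sum.delta)

lemma coeff_Q: "coeff (bm_Q m) j = (if j \<le> m then 2 ^ m * fact m * coeff (bm_P m) (m - j) else 0)"
proof -
  have "coeff (bm_Q m) j = (\<Sum>i = 0..m. if i = m - j \<and> j \<le> m then 2 ^ m * fact m * coeff (bm_P m) i else 0)"
    unfolding bm_Q_def coeff_sum coeff_monom
    by (rule sum.cong) auto
  also have "\<dots> = (if j \<le> m then 2 ^ m * fact m * coeff (bm_P m) (m - j) else 0)"
    by (cases "j \<le> m") (simp_all add: sum.delta)
  finally show ?thesis .
qed

lemma Qt_eq: "bm_Qt m = smult (2 ^ m * fact m) (bm_P m)"
proof (rule poly_eqI)
  fix n
  have "coeff (bm_Qt m) n = (\<Sum>j = 0..m. if j = m - n \<and> n \<le> m then coeff (bm_Q m) j else 0)"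
    unfolding bm_Qt_def coeff_sum coeff_monom
    by (rule sum.cong) auto
  also have "\<dots> = (if n \<le> m then coeff (bm_Q m) (m - n) else 0)"
    by (cases "n \<le> m") (simp_all add: sum.delta)
  also have "\<dots> = coeff (smult (2 ^ m * fact m) (bm_P m)) n"
    by (simp add: coeff_Q coeff_P)
  finally show "coeff (bm_Qt m) n = coeff (smult (2 ^ m * fact m) (bm_P m)) n" .
qed

definition A :: "nat \<Rightarrow> nat \<Rightarrow> real" where
  "A m k = (if k \<le> m then 2 ^ k * real ((2 * m - 2 * k) choose (m - k)) * real ((m + k) choose k) / 2 ^ (2 * m) else 0)"

definition T :: "nat \<Rightarrow> real poly" where
  "T m = (\<Sum>k\<le>m. smult (A m k) ([:1, 1:] ^ k))"

lemma coeff_lin: "coeff ([:1, 1:] ^ k) n = real (k choose n)"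
proof (cases "n \<le> k")
  case True thus ?thesis by (simp add: coeff_linear_poly_power)
next
  case False
  hence "degree ([:1::real, 1:] ^ k) < n" by (simp add: degree_power_eq)
  thus ?thesis using False by (simp add: coeff_eq_0)
qed

lemma P_eq_T: "bm_P m = T m"
proof (rule poly_eqI)
  fix n
  have cT: "coeff (T m) n = (\<Sum>k\<le>m. A m k * real (k choose n))"
    unfolding T_def coeff_sum by (simp add: coeff_lin)
  show "coeff (bm_P m) n = coeff (T m) n"
  proof (cases "n \<le> m")
    case False
    hence "(\<Sum>k\<le>m. A m k * real (k choose n)) = 0" by (intro sum.neutral) auto
    thus ?thesis using False by (simp add: coeff_P cT)
  next
    case True
    have "(\<Sum>k\<le>m. A m k * real (k choose n)) = (\<Sum>k=n..m. A m k * real (k choose n))"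
      by (rule sum.mono_neutral_right) auto
    also have "\<dots> = bm_d m n"
      unfolding bm_d_def sum_distrib_left
      by (rule sum.cong) (auto simp: A_def)
    finally show ?thesis using True by (simp add: coeff_P cT)
  qed
qed

lemma cen_nat: "(n + 1) * ((2 * n + 2) choose (n + 1)) = 2 * (2 * n + 1) * ((2 * n) choose n)"
proof -
  have a: "Suc (2*n+1) * ((2*n+1) choose n) = (Suc (2*n+1) choose Suc n) * Suc n"
    by (rule Suc_times_binomial_eq)
  have b: "Suc (2*n) * ((2*n) choose n) = (Suc (2*n) choose Suc n) * Suc n"
    by (rule Suc_times_binomial_eq)
  have c: "((2*n+1) choose n) = ((2*n+1) choose (n+1))"
    using binomial_symmetric[of n "2*n+1"] by simp
  have "(n + 1) * ((2 * n + 2) choose (n + 1)) = (2*n+2) * ((2*n+1) choose n)"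
    using a by simp
  also have "\<dots> = 2 * ((n+1) * ((2*n+1) choose (n+1)))" using c by simp
  also have "(n+1) * ((2*n+1) choose (n+1)) = (2*n+1) * ((2*n) choose n)"
    using b by simp
  finally show ?thesis by simp
qed

lemma cen: "(real n + 1) * real ((2 * n + 2) choose (n + 1)) = 2 * (2 * real n + 1) * real ((2 * n) choose n)"
proof -
  have "real ((n + 1) * ((2 * n + 2) choose (n + 1))) = real (2 * (2 * n + 1) * ((2 * n) choose n))"
    by (simp only: cen_nat)
  thus ?thesis by (simp only: of_nat_mult of_nat_add of_nat_numeral of_nat_1)
qed

lemma rec0: "2 * real (m + 1) * A (m + 1) 0 = (2 * real m + 1) * A m 0"
proof -
  have e1: "A (m+1) 0 = real ((2*m+2) choose (m+1)) / 2 ^ (2*m) / 4"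
    by (simp add: A_def power_add)
  have e2: "A m 0 = real ((2*m) choose m) / 2 ^ (2*m)"
    by (simp add: A_def)
  have g: "\<And>V U P::real. P > 0 \<Longrightarrow> (real m + 1) * V = 2 * (2 * real m + 1) * U \<Longrightarrow>
      2 * real (m + 1) * (V / P / 4) = (2 * real m + 1) * (U / P)"
  proof -
    fix V U P :: real assume p: "P > 0" and h: "(real m + 1) * V = 2 * (2 * real m + 1) * U"
    have "2 * real (m + 1) * (V / P / 4) = ((real m + 1) * V) / (2 * P)" using p by (simp add: field_simps)
    also have "\<dots> = (2 * real m + 1) * (U / P)" unfolding h using p by (simp add: field_simps)
    finally show "2 * real (m + 1) * (V / P / 4) = (2 * real m + 1) * (U / P)" .
  qed
  show ?thesis unfolding e1 e2 by (rule g[OF _ cen[of m]]) simp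
qed

lemma core:
  fixes V U X Y Z :: real and k n :: nat
  assumes h1: "(real k + 1) * Y = (2 * real k + real n + 2) * X"
    and h2: "(real k + real n + 2) * Z = (2 * real k + real n + 3) * Y"
    and h3: "(real n + 1) * V = 2 * (2 * real n + 1) * U"
  shows "(real k + real n + 2) * (V * Z) = (4 * real k + 2 * real n + 4) * (V * X) + (2 * real n + 1) * (2 * U * Y)"
proof -
  have "(real k + real n + 2) * (V * Z) = V * ((2 * real k + real n + 3) * Y)"
    using h2 by (metis mult.left_commute)
  also have "\<dots> = V * (2 * ((real k + 1) * Y)) + ((real n + 1) * V) * Y"
    by (simp add: algebra_simps)
  also have "\<dots> = V * (2 * ((2 * real k + real n + 2) * X)) + (2 * (2 * real n + 1) * U) * Y"
    by (simp only: h1 h3)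
  also have "\<dots> = (4 * real k + 2 * real n + 4) * (V * X) + (2 * real n + 1) * (2 * U * Y)"
    by (simp add: algebra_simps)
  finally show ?thesis .
qed

lemma recS:
  assumes km: "k \<le> m"
  shows "2 * real (m + 1) * A (m + 1) (Suc k) = (2 * real m + 2 * real k + 2) * A m k + (2 * real m - 1 - 2 * real k) * A m (Suc k)"
proof (cases "k = m")
  case True
  define V where "V = real ((2 * m + 2) choose (m + 1))"
  define U where "U = real ((2 * m) choose m)"
  define c :: real where "c = 2 ^ m / 2 ^ (2 * m)"
  have pw1: "\<And>a::real. 2 ^ Suc m * a / 2 ^ (2 * (m + 1)) = c * (a / 2)"
    unfolding c_def by (simp add: power_add mult_ac)
  have pw2: "\<And>a::real. 2 ^ m * a / 2 ^ (2 * m) = c * a"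
    unfolding c_def by simp
  have i1: "2 * (m + 1) - 2 * Suc m = 0" "m + 1 - Suc m = 0" "m + 1 + Suc m = 2 * m + 2" "2*m-2*m = 0" "m - m = 0" "m + m = 2 * m"
    "2 * (m + 1) - 2 * (m + 1) = 0" "m + 1 - (m + 1) = 0" "m + 1 + (m + 1) = 2 * m + 2"
    by simp_all
  have e1: "A (m + 1) (Suc k) = c * (V / 2)"
    unfolding True A_def V_def by (simp only: i1 le_refl add_right_mono[OF le_refl] if_True binomial_n_0 of_nat_1 mult_1_right Suc_eq_plus1 pw1[simplified Suc_eq_plus1])
  have e2: "A m k = c * U"
    unfolding True A_def U_def by (simp only: i1 le_refl add_right_mono[OF le_refl] if_True binomial_n_0 of_nat_1 mult_1_right pw2)
  have e3: "A m (Suc k) = 0" unfolding True A_def by simp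
  have h3: "(real m + 1) * V = 2 * (2 * real m + 1) * U" unfolding V_def U_def by (rule cen)
  have fin: "2 * real (m + 1) * (c * (V / 2)) = c * ((real m + 1) * V)" by (simp add: algebra_simps)
  have fin2: "c * ((real m + 1) * V) = (2 * real m + 2 * real m + 2) * (c * U)" unfolding h3 by (simp add: algebra_simps)
  show ?thesis unfolding e1 e2 e3 using fin fin2 True by simp
next
  case False
  then obtain n where mk: "m = k + n + 1" using km by (metis add.commute add_Suc_right le_neq_implies_less less_imp_Suc_add plus_1_eq_Suc)
  define V where "V = real ((2 * n + 2) choose (n + 1))"
  define U where "U = real ((2 * n) choose n)"
  define X where "X = real ((2 * k + n + 1) choose k)"
  define Y where "Y = real ((2 * k + n + 2) choose (k + 1))"
  define Z where "Z = real ((2 * k + n + 3) choose (k + 1))"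
  define c :: real where "c = 2 ^ k / 2 ^ (2 * m)"
  have pw1: "\<And>a::real. 2 ^ Suc k * a / 2 ^ (2 * (m + 1)) = c * (a / 2)"
    unfolding c_def by (simp add: power_add mult_ac)
  have pw2: "\<And>a::real. 2 ^ k * a / 2 ^ (2 * m) = c * a"
    unfolding c_def by simp
  have pw3: "\<And>a::real. 2 ^ Suc k * a / 2 ^ (2 * m) = c * (2 * a)"
    unfolding c_def by simp
  have i1: "2 * (m + 1) - 2 * Suc k = 2 * n + 2" "m + 1 - Suc k = n + 1" "m + 1 + Suc k = 2 * k + n + 3"
    "2 * m - 2 * k = 2 * n + 2" "m - k = n + 1" "m + k = 2 * k + n + 1"
    "2 * m - 2 * Suc k = 2 * n" "m - Suc k = n" "m + Suc k = 2 * k + n + 2"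
    "2 * (m + 1) - 2 * (k + 1) = 2 * n + 2" "m + 1 - (k + 1) = n + 1" "m + 1 + (k + 1) = 2 * k + n + 3"
    "2 * m - 2 * (k + 1) = 2 * n" "m - (k + 1) = n" "m + (k + 1) = 2 * k + n + 2"
    unfolding mk by simp_all
  have l1: "Suc k \<le> m + 1" "k \<le> m" "Suc k \<le> m" "k + 1 \<le> m + 1" "k + 1 \<le> m" using mk by simp_all
  have e1: "A (m + 1) (Suc k) = c * (V * Z / 2)"
    unfolding A_def V_def Z_def using l1 by (simp only: i1 if_True Suc_eq_plus1 mult.assoc pw1[simplified Suc_eq_plus1])
  have e2: "A m k = c * (V * X)"
    unfolding A_def V_def X_def using l1 by (simp only: i1 if_True mult.assoc pw2)
  have e3: "A m (Suc k) = c * (2 * U * Y)"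
    unfolding A_def U_def Y_def using l1 by (simp only: i1 if_True Suc_eq_plus1 mult.assoc pw3[simplified Suc_eq_plus1])
  have h3: "(real n + 1) * V = 2 * (2 * real n + 1) * U" unfolding V_def U_def by (rule cen)
  have h1: "(real k + 1) * Y = (2 * real k + real n + 2) * X"
  proof -
    have "Suc (2*k+n+1) * ((2*k+n+1) choose k) = (Suc (2*k+n+1) choose Suc k) * Suc k"
      by (rule Suc_times_binomial_eq)
    hence "real (Suc (2*k+n+1) * ((2*k+n+1) choose k)) = real ((Suc (2*k+n+1) choose Suc k) * Suc k)"
      by (simp only:)
    thus ?thesis unfolding X_def Y_def by (simp only: of_nat_mult of_nat_Suc of_nat_add of_nat_numeral of_nat_1 Suc_eq_plus1 add.assoc) (simp add: algebra_simps)
  qed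
  have h2: "(real k + real n + 2) * Z = (2 * real k + real n + 3) * Y"
  proof -
    have ab: "(2*k+n+3 - (k+1)) * ((2*k+n+3) choose (k+1)) = (2*k+n+3) * ((2*k+n+3 - 1) choose (k+1))"
      by (rule binomial_absorb_comp)
    have ii: "2*k+n+3-(k+1) = k+n+2" "2*k+n+3-1 = 2*k+n+2" by simp_all
    have "(k+n+2) * ((2*k+n+3) choose (k+1)) = (2*k+n+3) * ((2*k+n+2) choose (k+1))"
      using ab unfolding ii .
    hence "real ((k+n+2) * ((2*k+n+3) choose (k+1))) = real ((2*k+n+3) * ((2*k+n+2) choose (k+1)))"
      by (simp only:)
    thus ?thesis unfolding Z_def Y_def by (simp only: of_nat_mult of_nat_add of_nat_numeral of_nat_1)
  qed
  have C: "(real k + real n + 2) * (V * Z) = (4 * real k + 2 * real n + 4) * (V * X) + (2 * real n + 1) * (2 * U * Y)"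
    by (rule core[OF h1 h2 h3])
  have "2 * real (m + 1) * (c * (V * Z / 2)) = c * ((real k + real n + 2) * (V * Z))"
    unfolding mk by (simp add: algebra_simps)
  also have "\<dots> = c * ((4 * real k + 2 * real n + 4) * (V * X) + (2 * real n + 1) * (2 * U * Y))"
    unfolding C ..
  also have "\<dots> = (2 * real m + 2 * real k + 2) * (c * (V * X)) + (2 * real m - 1 - 2 * real k) * (c * (2 * U * Y))"
    unfolding mk by (simp add: algebra_simps)
  finally show ?thesis unfolding e1 e2 e3 .
qed

lemma A_out: "A m (Suc m) = 0" by (simp add: A_def)

lemma sumid:
  fixes y :: real
  shows "2 * real (m + 1) * (\<Sum>k\<le>Suc m. A (m + 1) k * y ^ k)
     = (2 * real (m + 1) * y + 2 * real m + 1) * (\<Sum>k\<le>m. A m k * y ^ k)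
       + 2 * (y - 1) * y * (\<Sum>k\<le>m. A m k * real k * y ^ (k - 1))"
proof -
  have s1: "(\<Sum>k\<le>m. 2 * real (m + 1) * (A (m + 1) (Suc k) * y ^ Suc k))
      = (\<Sum>k\<le>m. (2 * real m + 2 * real k + 2) * A m k * y ^ Suc k + (2 * real m - 1 - 2 * real k) * A m (Suc k) * y ^ Suc k)"
  proof (rule sum.cong)
    fix k assume "k \<in> {..m}"
    hence "k \<le> m" by simp
    from recS[OF this] show "2 * real (m + 1) * (A (m + 1) (Suc k) * y ^ Suc k) = (2 * real m + 2 * real k + 2) * A m k * y ^ Suc k + (2 * real m - 1 - 2 * real k) * A m (Suc k) * y ^ Suc k"
      by (metis (no_types, lifting) distrib_right mult.assoc)
  qed simp
  have L: "2 * real (m + 1) * (\<Sum>k\<le>Suc m. A (m + 1) k * y ^ k)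
     = (\<Sum>k\<le>m. (2 * real m + 2 * real k + 2) * A m k * y ^ Suc k)
       + ((2 * real m + 1) * A m 0 + (\<Sum>k\<le>m. (2 * real m - 1 - 2 * real k) * A m (Suc k) * y ^ Suc k))"
  proof -
    have a: "(\<Sum>k\<le>Suc m. A (m + 1) k * y ^ k) = A (m + 1) 0 + (\<Sum>k\<le>m. A (m + 1) (Suc k) * y ^ Suc k)"
      using sum.atMost_Suc_shift[of "\<lambda>k. A (m + 1) k * y ^ k" m] by simp
    have "2 * real (m + 1) * (\<Sum>k\<le>Suc m. A (m + 1) k * y ^ k)
       = 2 * real (m + 1) * A (m + 1) 0 + (\<Sum>k\<le>m. 2 * real (m + 1) * (A (m + 1) (Suc k) * y ^ Suc k))"
      unfolding a by (simp only: distrib_left sum_distrib_left)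
    also have "\<dots> = (2 * real m + 1) * A m 0 + ((\<Sum>k\<le>m. (2 * real m + 2 * real k + 2) * A m k * y ^ Suc k) + (\<Sum>k\<le>m. (2 * real m - 1 - 2 * real k) * A m (Suc k) * y ^ Suc k))"
      unfolding s1 rec0 sum.distrib ..
    finally show ?thesis by simp
  qed
  have E1: "(\<Sum>k\<le>Suc m. (2 * real m + 1 - 2 * real k) * A m k * y ^ k)
      = (2 * real m + 1) * A m 0 + (\<Sum>k\<le>m. (2 * real m + 1 - 2 * real (Suc k)) * A m (Suc k) * y ^ Suc k)"
    by (simp only: sum.atMost_Suc_shift) simp
  have E2: "(\<Sum>k\<le>Suc m. (2 * real m + 1 - 2 * real k) * A m k * y ^ k)
      = (\<Sum>k\<le>m. (2 * real m + 1 - 2 * real k) * A m k * y ^ k)"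
    by (simp add: A_out)
  have E3: "(\<Sum>k\<le>m. (2 * real m + 1 - 2 * real (Suc k)) * A m (Suc k) * y ^ Suc k)
       = (\<Sum>k\<le>m. (2 * real m - 1 - 2 * real k) * A m (Suc k) * y ^ Suc k)"
    by (rule sum.cong) (simp_all add: algebra_simps)
  have R: "(2 * real (m + 1) * y + 2 * real m + 1) * (\<Sum>k\<le>m. A m k * y ^ k)
       + 2 * (y - 1) * y * (\<Sum>k\<le>m. A m k * real k * y ^ (k - 1))
     = (\<Sum>k\<le>m. (2 * real m + 2 * real k + 2) * A m k * y ^ Suc k)
       + (\<Sum>k\<le>m. (2 * real m + 1 - 2 * real k) * A m k * y ^ k)"
    unfolding sum_distrib_left sum.distrib[symmetric]
  proof (rule sum.cong)
    fix k assume "k \<in> {..m}"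
    have yk: "y * (real k * y ^ (k - 1)) = real k * y ^ k" by (cases k) simp_all
    show "(2 * real (m + 1) * y + 2 * real m + 1) * (A m k * y ^ k) + 2 * (y - 1) * y * (A m k * real k * y ^ (k - 1))
       = (2 * real m + 2 * real k + 2) * A m k * y ^ Suc k + (2 * real m + 1 - 2 * real k) * A m k * y ^ k"
    proof -
      have "2 * (y - 1) * y * (A m k * real k * y ^ (k - 1)) = 2 * (y - 1) * A m k * (y * (real k * y ^ (k - 1)))"
        by (simp add: algebra_simps)
      also have "\<dots> = 2 * (y - 1) * A m k * (real k * y ^ k)" by (simp only: yk)
      finally have h: "2 * (y - 1) * y * (A m k * real k * y ^ (k - 1)) = 2 * (y - 1) * A m k * (real k * y ^ k)" .
      show ?thesis unfolding h by (simp add: algebra_simps)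
    qed
  qed simp
  show ?thesis unfolding L R using E1 E2 E3 by simp
qed

lemma pderiv_sum': "finite S \<Longrightarrow> pderiv (sum f S) = (\<Sum>x\<in>S. pderiv (f x))"
  by (induct rule: finite_induct) (simp_all add: pderiv_add)

lemma poly_T: "poly (T m) x = (\<Sum>k\<le>m. A m k * (1 + x) ^ k)"
  unfolding T_def by (simp add: poly_sum)

lemma poly_dT: "poly (pderiv (T m)) x = (\<Sum>k\<le>m. A m k * real k * (1 + x) ^ (k - 1))"
  unfolding T_def by (simp add: pderiv_sum' pderiv_smult pderiv_power poly_sum pderiv_pCons mult.assoc)

theorem mainTheorem7:
  fixes m :: nat
  shows "(\<forall>x::real. poly (bm_Qt (m + 1)) x =
            (2 * real m * x + 4 * real m + 2 * x + 3) * poly (bm_Qt m) x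
            + 2 * x * (1 + x) * poly (pderiv (bm_Qt m)) x)
         \<and> bm_Qt 0 = 1"
proof
  show "bm_Qt 0 = 1"
    unfolding Qt_eq P_eq_T T_def by (simp add: A_def)
  show "\<forall>x::real. poly (bm_Qt (m + 1)) x =
            (2 * real m * x + 4 * real m + 2 * x + 3) * poly (bm_Qt m) x
            + 2 * x * (1 + x) * poly (pderiv (bm_Qt m)) x"
  proof
    fix x :: real
    define c :: real where "c = 2 ^ m * fact m"
    define S where "S = (\<Sum>k\<le>m. A m k * (1 + x) ^ k)"
    define S' where "S' = (\<Sum>k\<le>m. A m k * real k * (1 + x) ^ (k - 1))"
    have q1: "poly (bm_Qt (m + 1)) x = c * (2 * real (m + 1) * (\<Sum>k\<le>Suc m. A (m + 1) k * (1 + x) ^ k))"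
      unfolding Qt_eq P_eq_T c_def by (simp add: poly_T algebra_simps)
    have q2: "poly (bm_Qt m) x = c * S"
      unfolding Qt_eq P_eq_T c_def S_def by (simp add: poly_T)
    have q3: "poly (pderiv (bm_Qt m)) x = c * S'"
      unfolding Qt_eq P_eq_T c_def S'_def by (simp add: pderiv_smult poly_dT)
    have si: "2 * real (m + 1) * (\<Sum>k\<le>Suc m. A (m + 1) k * (1 + x) ^ k)
       = (2 * real (m + 1) * (1 + x) + 2 * real m + 1) * S + 2 * ((1 + x) - 1) * (1 + x) * S'"
      unfolding S_def S'_def by (rule sumid)
    show "poly (bm_Qt (m + 1)) x =
            (2 * real m * x + 4 * real m + 2 * x + 3) * poly (bm_Qt m) x
            + 2 * x * (1 + x) * poly (pderiv (bm_Qt m)) x"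
      unfolding q1 q2 q3 si by (simp add: algebra_simps)
  qed
qed

end
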